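(* Let $G$ be a bipartite cubic graph and let $C = v_1v_2\cdots v_tv_1$ be a cycle in $G$ with $t \ge 6$. Then $V(C)$ can be partitioned into at most $\frac{t}{3}$ sets $W_1,\dots,W_m$ (so $m \le t/3$) such that each $G[W_j]$ is a path with at least $2$ vertices.
   Context: All graphs are finite and simple; cubic means $3$-regular. $G[W]$ denotes the subgraph of $G$ induced on the vertex set $W$. *)

theory Defs
  imports Main
begin

definition simple_graph :: "'a set \<Rightarrow> ('a \<Rightarrow> 'a \<Rightarrow> bool) \<Rightarrow> bool" where
  "simple_graph V E \<longleftrightarrow> finite V \<and> (\<forall>x y. E x y \<longrightarrow> x \<in> V \<and> y \<in> V)
     \<and> (\<forall>x y. E x y \<longrightarrow> E y x) \<and> (\<forall>x. \<not> E x x)"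

definition cubic :: "'a set \<Rightarrow> ('a \<Rightarrow> 'a \<Rightarrow> bool) \<Rightarrow> bool" where
  "cubic V E \<longleftrightarrow> (\<forall>v\<in>V. card {u \<in> V. E v u} = 3)"

definition bipartite :: "'a set \<Rightarrow> ('a \<Rightarrow> 'a \<Rightarrow> bool) \<Rightarrow> bool" where
  "bipartite V E \<longleftrightarrow> (\<exists>A B. A \<union> B = V \<and> A \<inter> B = {} \<and>
     (\<forall>x y. E x y \<longrightarrow> (x \<in> A \<and> y \<in> B) \<or> (x \<in> B \<and> y \<in> A)))"

text \<open>The list vs = [v_1,...,v_t] describes the cycle v_1 v_2 ... v_t v_1 in G (a subgraph, not necessarily induced).\<close>
definition is_cycle :: "'a set \<Rightarrow> ('a \<Rightarrow> 'a \<Rightarrow> bool) \<Rightarrow> 'a list \<Rightarrow> bool" where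
  "is_cycle V E vs \<longleftrightarrow> length vs \<ge> 3 \<and> distinct vs \<and> set vs \<subseteq> V \<and>
     (\<forall>i < length vs. E (vs ! i) (vs ! ((i + 1) mod length vs)))"

text \<open>G[W] is a path: W can be listed as distinct ps such that two vertices of W are adjacent
  in G exactly when they are consecutive in ps.\<close>
definition induced_path :: "('a \<Rightarrow> 'a \<Rightarrow> bool) \<Rightarrow> 'a set \<Rightarrow> bool" where
  "induced_path E W \<longleftrightarrow> (\<exists>ps. distinct ps \<and> set ps = W \<and>
     (\<forall>i < length ps. \<forall>j < length ps. E (ps ! i) (ps ! j) \<longleftrightarrow> (i = j + 1 \<or> j = i + 1)))"

end

theory Submission imports Defs begin

lemma cyc_edge:
  assumes "is_cycle V E vs"
  shows "E (vs ! (j mod length vs)) (vs ! (Suc j mod length vs))"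
proof -
  have t: "length vs > 0" using assms unfolding is_cycle_def by auto
  hence "j mod length vs < length vs" by simp
  hence "E (vs ! (j mod length vs)) (vs ! ((j mod length vs + 1) mod length vs))"
    using assms unfolding is_cycle_def by blast
  moreover have "(j mod length vs + 1) mod length vs = Suc j mod length vs"
    by (simp add: mod_Suc_eq)
  ultimately show ?thesis by simp
qed

lemma cyc_edge_lin:
  assumes "is_cycle V E vs" "Suc j < length vs"
  shows "E (vs ! j) (vs ! Suc j)"
  using cyc_edge[OF assms(1), of j] assms(2) by simp

lemma rotate_cycle:
  assumes "is_cycle V E vs"
  shows "is_cycle V E (rotate r vs)"
  unfolding is_cycle_def
proof (intro conjI allI impI)
  show "length (rotate r vs) \<ge> 3" "distinct (rotate r vs)" "set (rotate r vs) \<subseteq> V"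
    using assms unfolding is_cycle_def by auto
  fix i assume i: "i < length (rotate r vs)"
  let ?t = "length vs"
  have t: "?t > 0" using i by (metis length_rotate less_nat_zero_code neq0_conv)
  have "(i + 1) mod ?t < ?t" using t by simp
  hence "rotate r vs ! ((i + 1) mod length (rotate r vs)) = vs ! ((r + (i+1) mod ?t) mod ?t)"
    by (simp add: nth_rotate)
  also have "(r + (i+1) mod ?t) mod ?t = Suc (r + i) mod ?t"
    by (simp add: mod_add_right_eq)
  finally have 1: "rotate r vs ! ((i + 1) mod length (rotate r vs)) = vs ! (Suc (r + i) mod ?t)" .
  have 2: "rotate r vs ! i = vs ! ((r + i) mod ?t)" using i by (simp add: nth_rotate)
  show "E (rotate r vs ! i) (rotate r vs ! ((i + 1) mod length (rotate r vs)))"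
    unfolding 1 2 by (rule cyc_edge[OF assms])
qed

lemma cyc_parity:
  assumes sg: "simple_graph V E" and bp: "bipartite V E" and cy: "is_cycle V E vs"
    and p: "p < length vs" and q: "q < length vs" and e: "E (vs ! p) (vs ! q)"
  shows "odd (p + q)"
proof -
  obtain A B where AB: "A \<union> B = V" "A \<inter> B = {}"
    "\<forall>x y. E x y \<longrightarrow> (x \<in> A \<and> y \<in> B) \<or> (x \<in> B \<and> y \<in> A)"
    using bp unfolding bipartite_def by blast
  have col: "n < length vs \<Longrightarrow> (vs ! n \<in> A) = (if even n then vs ! 0 \<in> A else vs ! 0 \<notin> A)" for n
  proof (induction n)
    case 0 then show ?case by simp
  next
    case (Suc n)
    have "E (vs ! n) (vs ! Suc n)" using cyc_edge_lin[OF cy Suc.prems] .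
    hence "(vs ! Suc n \<in> A) = (vs ! n \<notin> A)" using AB by blast
    then show ?case using Suc by auto
  qed
  have "(vs ! p \<in> A) = (vs ! q \<notin> A)" using e AB by blast
  then show ?thesis using col[OF p] col[OF q] by (auto split: if_splits)
qed


lemma arc_good:
  assumes sg: "simple_graph V E" and bp: "bipartite V E" and cy: "is_cycle V E ws"
    and sk: "s + k \<le> length ws" and k2: "2 \<le> k" and k5: "k \<le> 5"
    and nb: "\<forall>a. a + 3 < k \<longrightarrow> \<not> E (ws ! (s + a)) (ws ! (s + a + 3))"
  shows "induced_path E (set (take k (drop s ws))) \<and> card (set (take k (drop s ws))) \<ge> 2"
proof -
  let ?ps = "take k (drop s ws)"
  have dist: "distinct ws" using cy unfolding is_cycle_def by auto
  have dps: "distinct ?ps" using dist by simp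
  have len: "length ?ps = k" using sk by simp
  have nth: "i < k \<Longrightarrow> ?ps ! i = ws ! (s + i)" for i using sk by simp
  have sym: "E x y \<Longrightarrow> E y x" for x y using sg unfolding simple_graph_def by blast
  have irr: "\<not> E x x" for x using sg unfolding simple_graph_def by blast
  have key: "E (ws ! (s + i)) (ws ! (s + j)) \<longleftrightarrow> (i = j + 1 \<or> j = i + 1)"
    if i: "i < k" and j: "j < k" for i j
  proof
    assume e: "E (ws ! (s + i)) (ws ! (s + j))"
    have "odd ((s + i) + (s + j))" using cyc_parity[OF sg bp cy _ _ e] i j sk by simp
    hence o: "odd (i + j)" by presburger
    show "i = j + 1 \<or> j = i + 1"
    proof (rule ccontr)
      assume "\<not> (i = j + 1 \<or> j = i + 1)"
      with o i j k5 have "i = j + 3 \<or> j = i + 3" by presburger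
      then show False
      proof
        assume "i = j + 3" then show False using nb e i sym by (metis add.assoc)
      next
        assume "j = i + 3" then show False using nb e j by (metis add.assoc)
      qed
    qed
  next
    assume "i = j + 1 \<or> j = i + 1"
    then show "E (ws ! (s + i)) (ws ! (s + j))"
    proof
      assume h: "i = j + 1"
      have "E (ws ! (s + j)) (ws ! Suc (s + j))" using cyc_edge_lin[OF cy] i h sk by simp
      then show ?thesis using h sym by simp
    next
      assume h: "j = i + 1"
      have "E (ws ! (s + i)) (ws ! Suc (s + i))" using cyc_edge_lin[OF cy] j h sk by simp
      then show ?thesis using h by simp
    qed
  qed
  have "induced_path E (set ?ps)"
    unfolding induced_path_def
    by (rule exI[of _ ?ps]) (use dps len nth key in auto)
  moreover have "card (set ?ps) \<ge> 2" using distinct_card[OF dps] len k2 by simp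
  ultimately show ?thesis by blast
qed

fun blocks :: "nat list \<Rightarrow> 'b list \<Rightarrow> 'b list list" where
  "blocks [] xs = []"
| "blocks (k # ks) xs = take k xs # blocks ks (drop k xs)"

lemma blocks_part:
  assumes "distinct xs" "sum_list ls = length xs" "\<forall>k\<in>set ls. k \<ge> 1"
  shows "\<Union>(set (map set (blocks ls xs))) = set xs \<and> (\<forall>W\<in>set (map set (blocks ls xs)). W \<noteq> {}) \<and>
     (\<forall>W1\<in>set (map set (blocks ls xs)). \<forall>W2\<in>set (map set (blocks ls xs)). W1 \<noteq> W2 \<longrightarrow> W1 \<inter> W2 = {}) \<and>
     card (set (map set (blocks ls xs))) \<le> length ls"
  using assms
proof (induction ls arbitrary: xs)
  case Nil then show ?case by simp
next
  case (Cons k ks)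
  have IH: "\<Union>(set (map set (blocks ks (drop k xs)))) = set (drop k xs) \<and>
     (\<forall>W\<in>set (map set (blocks ks (drop k xs))). W \<noteq> {}) \<and>
     (\<forall>W1\<in>set (map set (blocks ks (drop k xs))). \<forall>W2\<in>set (map set (blocks ks (drop k xs))). W1 \<noteq> W2 \<longrightarrow> W1 \<inter> W2 = {}) \<and>
     card (set (map set (blocks ks (drop k xs)))) \<le> length ks"
  proof -
    have "distinct (drop k xs)" "sum_list ks = length (drop k xs)" "\<forall>k\<in>set ks. k \<ge> 1"
      using Cons.prems by auto
    from Cons.IH[OF this] show ?thesis .
  qed
  have disj: "set (take k xs) \<inter> set (drop k xs) = {}"
    using set_take_disj_set_drop_if_distinct[OF Cons.prems(1)] by simp
  have sub: "W \<in> set (map set (blocks ks (drop k xs))) \<Longrightarrow> W \<subseteq> set (drop k xs)" for W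
    using IH by blast
  have ne: "set (take k xs) \<noteq> {}" using Cons.prems by auto
  have un: "set (take k xs) \<union> set (drop k xs) = set xs"
    by (metis append_take_drop_id set_append)
  show ?case
  proof (intro conjI)
    show "\<Union>(set (map set (blocks (k # ks) xs))) = set xs" using IH un by auto
    show "\<forall>W\<in>set (map set (blocks (k # ks) xs)). W \<noteq> {}" using IH ne by auto
    show "\<forall>W1\<in>set (map set (blocks (k # ks) xs)). \<forall>W2\<in>set (map set (blocks (k # ks) xs)). W1 \<noteq> W2 \<longrightarrow> W1 \<inter> W2 = {}"
      using IH sub disj by simp blast
    show "card (set (map set (blocks (k # ks) xs))) \<le> length (k # ks)"
      using IH by (simp add: card_insert_le_m1)
  qed
qed

lemma blocks_form:
  "b \<in> set (blocks ls xs) \<Longrightarrow> sum_list ls = length xs \<Longrightarrow>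
   \<exists>s k. b = take k (drop s xs) \<and> k \<in> set ls \<and> s + k \<le> length xs"
proof (induction ls arbitrary: xs)
  case Nil then show ?case by simp
next
  case (Cons k ks)
  show ?case
  proof (cases "b = take k xs")
    case True then show ?thesis using Cons.prems by (intro exI[of _ 0] exI[of _ k]) auto
  next
    case False
    then have "b \<in> set (blocks ks (drop k xs))" using Cons.prems by simp
    moreover have "sum_list ks = length (drop k xs)" using Cons.prems by simp
    ultimately obtain s k' where
      "b = take k' (drop s (drop k xs))" "k' \<in> set ks" "s + k' \<le> length (drop k xs)"
      using Cons.IH by blast
    then have "b = take k' (drop (k + s) xs) \<and> k' \<in> set (k # ks) \<and> (k + s) + k' \<le> length xs"
      using Cons.prems(2) by (auto simp: add.commute)
    then show ?thesis by blast
  qed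
qed

lemma no4:
  assumes sg: "simple_graph V E" and cu: "cubic V E" and v: "v \<in> V"
    and "E v a" "E v b" "E v c" "E v d" "distinct [a,b,c,d]"
  shows False
proof -
  have fin: "finite {u \<in> V. E v u}" using sg unfolding simple_graph_def by auto
  have "{a,b,c,d} \<subseteq> {u \<in> V. E v u}" using assms sg unfolding simple_graph_def by blast
  hence "card {a,b,c,d} \<le> card {u \<in> V. E v u}" using fin card_mono by blast
  moreover have "card {a,b,c,d} = 4" using assms(8) by simp
  moreover have "card {u \<in> V. E v u} = 3" using cu v unfolding cubic_def by blast
  ultimately show False by simp
qed


lemma blocks_append:
  "sum_list h \<le> length xs \<Longrightarrow> blocks (h @ r) xs = blocks h xs @ blocks r (drop (sum_list h) xs)"
  by (induction h arbitrary: xs) (auto simp: add.commute)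

lemma three_blocks:
  assumes sg: "simple_graph V E" and bp: "bipartite V E" and cy: "is_cycle V E ws"
    and m: "m + 3 * n = length ws" and b: "b \<in> set (blocks (replicate n 3) (drop m ws))"
  shows "induced_path E (set b) \<and> card (set b) \<ge> 2"
proof -
  have "sum_list (replicate n 3) = length (drop m ws)" using m by (simp add: sum_list_replicate)
  from blocks_form[OF b this] obtain s k where
    "b = take k (drop s (drop m ws))" "k \<in> set (replicate n (3::nat))" "s + k \<le> length (drop m ws)" by blast
  hence "b = take 3 (drop (m + s) ws)" "m + s + 3 \<le> length ws" by (auto simp: add.commute)
  then show ?thesis using arc_good[OF sg bp cy, of "m + s" 3] by simp
qed

lemma sum3: "\<forall>k\<in>set ls. (k::nat) \<ge> 3 \<Longrightarrow> 3 * length ls \<le> sum_list ls"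
  by (induction ls) auto

lemma finish:
  assumes sg: "simple_graph V E" and bp: "bipartite V E" and cy: "is_cycle V E ws"
    and sm: "sum_list h + 3 * n = length ws" and h3: "\<forall>k\<in>set h. k \<ge> 3"
    and hg: "\<forall>b\<in>set (blocks h ws). induced_path E (set b) \<and> card (set b) \<ge> 2"
  shows "\<exists>P :: 'a set set. \<Union>P = set ws \<and> (\<forall>W\<in>P. W \<noteq> {}) \<and>
           (\<forall>W1\<in>P. \<forall>W2\<in>P. W1 \<noteq> W2 \<longrightarrow> W1 \<inter> W2 = {}) \<and>
           3 * card P \<le> length ws \<and>
           (\<forall>W\<in>P. induced_path E W \<and> card W \<ge> 2)"
proof -
  let ?ls = "h @ replicate n 3"
  have d: "distinct ws" using cy unfolding is_cycle_def by auto
  have s: "sum_list ?ls = length ws" using sm by (simp add: sum_list_replicate)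
  have g: "\<forall>k\<in>set ?ls. k \<ge> 1" "\<forall>k\<in>set ?ls. k \<ge> 3" using h3 by auto
  note bp2 = blocks_part[OF d s g(1)]
  have "3 * length ?ls \<le> length ws" using sum3[OF g(2)] s by simp
  hence c: "3 * card (set (map set (blocks ?ls ws))) \<le> length ws" using bp2 by linarith
  have ba: "blocks ?ls ws = blocks h ws @ blocks (replicate n 3) (drop (sum_list h) ws)"
    using sm by (intro blocks_append) simp
  have good: "\<forall>W\<in>set (map set (blocks ?ls ws)). induced_path E W \<and> card W \<ge> 2"
  proof
    fix W assume "W \<in> set (map set (blocks ?ls ws))"
    then obtain b where b: "b \<in> set (blocks ?ls ws)" "W = set b" by auto
    show "induced_path E W \<and> card W \<ge> 2"
    proof (cases "b \<in> set (blocks h ws)")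
      case True then show ?thesis using hg b by blast
    next
      case False
      hence "b \<in> set (blocks (replicate n 3) (drop (sum_list h) ws))" using b ba by simp
      from three_blocks[OF sg bp cy sm this] show ?thesis using b by simp
    qed
  qed
  show ?thesis using bp2 c good by (intro exI[of _ "set (map set (blocks ?ls ws))"]) blast
qed

lemma mod_ne:
  assumes "a < b" "b < (t::nat)"
  shows "(i + a) mod t \<noteq> (i + b) mod t"
proof
  assume "(i + a) mod t = (i + b) mod t"
  hence "t dvd (i + b) - (i + a)" using mod_eq_dvd_iff_nat[of "i+a" "i+b" t] assms by simp
  hence "t dvd b - a" by simp
  with assms show False by (meson diff_less_mono2 dvd_imp_le less_imp_diff_less zero_less_diff not_le diff_le_self order.strict_trans2)
qed

lemma bad_next:
  assumes sg: "simple_graph V E" and cu: "cubic V E" and cy: "is_cycle V E vs"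
    and t: "length vs \<ge> 7"
    and e: "E (vs ! (i mod length vs)) (vs ! ((i + 3) mod length vs))"
  shows "\<not> E (vs ! ((i + 3) mod length vs)) (vs ! ((i + 3 + 3) mod length vs))"
proof
  let ?t = "length vs"
  let ?w = "\<lambda>a. vs ! ((i + a) mod ?t)"
  assume e2: "E (?w 3) (vs ! ((i + 3 + 3) mod ?t))"
  have sym: "E x y \<Longrightarrow> E y x" for x y using sg unfolding simple_graph_def by blast
  have d: "distinct vs" and sV: "set vs \<subseteq> V" using cy unfolding is_cycle_def by auto
  have tp: "?t > 0" using t by linarith
  have inV: "?w 3 \<in> V" using sV tp by (meson mod_less_divisor nth_mem subsetD)
  have n1: "E (?w 3) (?w 2)" using cyc_edge[OF cy, of "i+2"] sym by (simp add: numeral_eq_Suc)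
  have n2: "E (?w 3) (?w 4)" using cyc_edge[OF cy, of "i+3"] by (simp add: numeral_eq_Suc)
  have n3: "E (?w 3) (?w 0)" using e sym by simp
  have n4: "E (?w 3) (?w 6)" using e2 by (simp add: add.assoc)
  have inj: "a < b \<Longrightarrow> b < ?t \<Longrightarrow> ?w a \<noteq> ?w b" for a b
    using mod_ne[of a b ?t i] d tp by (simp add: nth_eq_iff_index_eq)
  have "distinct [?w 2, ?w 4, ?w 0, ?w 6]" using inj[of 2 4] inj[of 0 2] inj[of 2 6] inj[of 0 4]
      inj[of 4 6] inj[of 0 6] t by auto
  from no4[OF sg cu inV n1 n2 n3 n4 this] show False .
qed


theorem mainTheorem6:
  fixes V :: "'a set" and E :: "'a \<Rightarrow> 'a \<Rightarrow> bool" and vs :: "'a list"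
  assumes "simple_graph V E" and "cubic V E" and "bipartite V E"
    and "is_cycle V E vs" and "length vs \<ge> 6"
  shows "\<exists>P :: 'a set set. \<Union>P = set vs \<and> (\<forall>W\<in>P. W \<noteq> {}) \<and>
           (\<forall>W1\<in>P. \<forall>W2\<in>P. W1 \<noteq> W2 \<longrightarrow> W1 \<inter> W2 = {}) \<and>
           3 * card P \<le> length vs \<and>
           (\<forall>W\<in>P. induced_path E W \<and> card W \<ge> 2)"
proof -
  note sg = assms(1) and cu = assms(2) and bp = assms(3) and cy = assms(4)
  let ?t = "length vs"
  define bad where "bad i \<longleftrightarrow> E (vs ! (i mod ?t)) (vs ! ((i + 3) mod ?t))" for i
  have rc: "is_cycle V E (rotate r vs)" for r using rotate_cycle[OF cy] .
  have rn: "a < ?t \<Longrightarrow> rotate r vs ! a = vs ! ((r + a) mod ?t)" for r a by (simp add: nth_rotate)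
  have rs: "set (rotate r vs) = set vs" "length (rotate r vs) = ?t" for r by simp_all
  have nxt: "?t \<ge> 7 \<Longrightarrow> bad i \<Longrightarrow> \<not> bad (i + 3)" for i
    using bad_next[OF sg cu cy] unfolding bad_def by blast
  have one: "?thesis" if nb: "\<not> bad r" and h: "?t = 4 + 3 * n" for r n
  proof -
    let ?ws = "rotate r vs"
    have "\<not> E (?ws ! (0 + 0)) (?ws ! (0 + 0 + 3))" using nb h rn[of 0 r] rn[of 3 r] unfolding bad_def by simp
    hence "\<forall>a. a + 3 < 4 \<longrightarrow> \<not> E (?ws ! (0 + a)) (?ws ! (0 + a + 3))" by (auto simp: less_Suc_eq)
    from arc_good[OF sg bp rc, of 0 4, OF _ _ _ this] h
    have "induced_path E (set (take 4 ?ws)) \<and> card (set (take 4 ?ws)) \<ge> 2" by simp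
    hence "\<forall>b\<in>set (blocks [4] ?ws). induced_path E (set b) \<and> card (set b) \<ge> 2" by simp
    from finish[OF sg bp rc, of "[4]" n, OF _ _ this] h show ?thesis by simp
  qed
  have five: "?thesis" if nb: "\<not> bad r" "\<not> bad (r + 1)" and h: "?t = 5 + 3 * n" for r n
  proof -
    let ?ws = "rotate r vs"
    have f1: "\<not> E (?ws ! 0) (?ws ! 3)" using nb h rn[of 0 r] rn[of 3 r] unfolding bad_def by simp
    have f2: "\<not> E (?ws ! 1) (?ws ! 4)" using nb h rn[of 1 r] rn[of 4 r] unfolding bad_def
      by (simp add: add.commute)
    have "\<forall>a. a + 3 < 5 \<longrightarrow> \<not> E (?ws ! (0 + a)) (?ws ! (0 + a + 3))"
    proof (intro allI impI)
      fix a :: nat assume "a + 3 < 5"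
      hence "a = 0 \<or> a = 1" by arith
      then show "\<not> E (?ws ! (0 + a)) (?ws ! (0 + a + 3))" using f1 f2 by (elim disjE) simp_all
    qed
    from arc_good[OF sg bp rc, of 0 5, OF _ _ _ this] h
    have "induced_path E (set (take 5 ?ws)) \<and> card (set (take 5 ?ws)) \<ge> 2" by simp
    hence "\<forall>b\<in>set (blocks [5] ?ws). induced_path E (set b) \<and> card (set b) \<ge> 2" by simp
    from finish[OF sg bp rc, of "[5]" n, OF _ _ this] h show ?thesis by simp
  qed
  have two4: "?thesis" if nb: "\<not> bad r" "\<not> bad (r + 4)" and h: "?t = 8 + 3 * n" for r n
  proof -
    let ?ws = "rotate r vs"
    have "\<not> E (?ws ! (0 + 0)) (?ws ! (0 + 0 + 3))" using nb h rn[of 0 r] rn[of 3 r] unfolding bad_def by simp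
    hence "\<forall>a. a + 3 < 4 \<longrightarrow> \<not> E (?ws ! (0 + a)) (?ws ! (0 + a + 3))" by (auto simp: less_Suc_eq)
    from arc_good[OF sg bp rc, of 0 4, OF _ _ _ this] h
    have g1: "induced_path E (set (take 4 ?ws)) \<and> card (set (take 4 ?ws)) \<ge> 2" by simp
    have "\<not> E (?ws ! (4 + 0)) (?ws ! (4 + 0 + 3))" using nb h rn[of 4 r] rn[of 7 r] unfolding bad_def
      by (simp add: add.assoc)
    hence "\<forall>a. a + 3 < 4 \<longrightarrow> \<not> E (?ws ! (4 + a)) (?ws ! (4 + a + 3))" by (auto simp: less_Suc_eq)
    from arc_good[OF sg bp rc, of 4 4, OF _ _ _ this] h
    have g2: "induced_path E (set (take 4 (drop 4 ?ws))) \<and> card (set (take 4 (drop 4 ?ws))) \<ge> 2" by simp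
    have "\<forall>b\<in>set (blocks [4,4] ?ws). induced_path E (set b) \<and> card (set b) \<ge> 2" using g1 g2 by simp
    from finish[OF sg bp rc, of "[4,4]" n, OF _ _ this] h show ?thesis by simp
  qed
  consider "?t mod 3 = 0" | "?t mod 3 = 1" | "?t mod 3 = 2" by linarith
  then show ?thesis
  proof cases
    case 1
    hence "?t = 3 * (?t div 3)" by presburger
    from finish[OF sg bp cy, of "[]" "?t div 3"] this show ?thesis by simp
  next
    case 2
    hence t7: "?t \<ge> 7" "?t = 4 + 3 * ((?t - 4) div 3)" using assms(5) by presburger+
    show ?thesis
    proof (cases "bad 0")
      case True
      hence "\<not> bad 3" using nxt[OF t7(1), of 0] by simp
      then show ?thesis using one t7(2) by blast
    next
      case False
      then show ?thesis using one t7(2) by blast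
    qed
  next
    case 3
    hence t7: "?t \<ge> 7" using assms(5) by presburger
    show ?thesis
    proof (cases "\<exists>r. \<not> bad r \<and> \<not> bad (r + 1)")
      case True
      moreover have "?t = 5 + 3 * ((?t - 5) div 3)" using 3 assms(5) by presburger
      ultimately show ?thesis using five by blast
    next
      case False
      hence all: "bad r \<or> bad (r + 1)" for r by blast
      obtain i where bi: "bad i" using all[of 0] by blast
      have n3: "\<not> bad (i + 3)" using nxt[OF t7 bi] .
      have "bad (i + 4)" using all[of "i + 3"] n3 by (simp add: add.assoc add.commute)
      hence n7: "\<not> bad (i + 3 + 4)" using nxt[OF t7, of "i + 4"] by (simp add: add.commute add.left_commute)
      have "?t = 8 + 3 * ((?t - 8) div 3)" using 3 assms(5) by presburger
      then show ?thesis using two4[OF n3 n7] by blast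
    qed
  qed
qed

end
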